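(* Let $m \geq 1$ be an integer. Suppose that $J$ is a $7 \times 7$ Jacobi matrix that realizes perfect state transfer and whose spectrum is $\{0, \pm 1, \pm 2m, \pm (2m+1)\}$. Then $J$ does not exhibit early state exclusion.
   Context: A Jacobi matrix of order $N+1$ is a real symmetric tridiagonal matrix $J$ with diagonal entries $a_1,\dots,a_{N+1}\in\mathbb{R}$ and off-diagonal entries $b_1,\dots,b_N>0$ (so $J_{i,i}=a_i$, $J_{i,i+1}=J_{i+1,i}=b_i$, all other entries zero). Let $\{\mathbf{e}_k\}_{k=0}^{N}$ be the canonical basis of $\mathbb{C}^{N+1}$, with $\mathbf{e}_0=[1,0,\dots,0]^\top$ and $\mathbf{e}_N=[0,\dots,0,1]^\top$, and let $\langle\cdot,\cdot\rangle$ be the standard inner product on $\mathbb{C}^{N+1}$. $J$ realizes perfect state transfer (PST) at time $T>0$ if $e^{-iJT}\mathbf{e}_0 = e^{i\phi}\mathbf{e}_N$ for some $\phi\in\mathbb{R}$; "$J$ realizes PST" means this holds for some $T>0$. If $J$ realizes PST and $T>0$ is the earliest time at which it does, then $J$ exhibits early state exclusion (ESE) at time $\tau$ if $\tau\in(0,T)$ and $\langle e^{-iJ\tau}\mathbf{e}_0,\mathbf{e}_0\rangle = 0$; $J$ exhibits ESE if it does so at some such $\tau$. Here $N+1=7$. *)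

theory Defs
  imports "HOL-Analysis.Analysis"
begin

text \<open>Matrices of order N+1 are functions on indices 0..N (0-based; index 0 is e_0,
 index N is e_N). The Jacobi matrix with diagonal a 0..a N and off-diagonal b 0..b (N-1).\<close>

definition jacobi_mat :: "nat \<Rightarrow> (nat \<Rightarrow> real) \<Rightarrow> (nat \<Rightarrow> real) \<Rightarrow> nat \<Rightarrow> nat \<Rightarrow> real" where
  "jacobi_mat N a b i j =
     (if i \<le> N \<and> j \<le> N then
        (if i = j then a i else if j = i + 1 then b i else if i = j + 1 then b j else 0)
      else 0)"

definition is_jacobi_params :: "nat \<Rightarrow> (nat \<Rightarrow> real) \<Rightarrow> (nat \<Rightarrow> real) \<Rightarrow> bool" where
  "is_jacobi_params N a b \<longleftrightarrow> (\<forall>i<N. b i > 0)"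

definition mvec :: "nat \<Rightarrow> (nat \<Rightarrow> nat \<Rightarrow> real) \<Rightarrow> (nat \<Rightarrow> complex) \<Rightarrow> nat \<Rightarrow> complex" where
  "mvec N M v i = (\<Sum>j\<le>N. complex_of_real (M i j) * v j)"

definition evol :: "nat \<Rightarrow> (nat \<Rightarrow> nat \<Rightarrow> real) \<Rightarrow> real \<Rightarrow> (nat \<Rightarrow> complex) \<Rightarrow> nat \<Rightarrow> complex" where
  "evol N M t v i = (\<Sum>k. ((- \<i> * complex_of_real t) ^ k / of_nat (fact k)) * ((mvec N M ^^ k) v) i)"

definition ebasis :: "nat \<Rightarrow> nat \<Rightarrow> complex" where
  "ebasis k i = (if i = k then 1 else 0)"

definition cinner :: "nat \<Rightarrow> (nat \<Rightarrow> complex) \<Rightarrow> (nat \<Rightarrow> complex) \<Rightarrow> complex" where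
  "cinner N x y = (\<Sum>i\<le>N. x i * cnj (y i))"

definition PST_at :: "nat \<Rightarrow> (nat \<Rightarrow> nat \<Rightarrow> real) \<Rightarrow> real \<Rightarrow> bool" where
  "PST_at N M T \<longleftrightarrow> T > 0 \<and>
     (\<exists>\<phi>::real. \<forall>i\<le>N. evol N M T (ebasis 0) i = exp (\<i> * complex_of_real \<phi>) * ebasis N i)"

definition realizes_PST :: "nat \<Rightarrow> (nat \<Rightarrow> nat \<Rightarrow> real) \<Rightarrow> bool" where
  "realizes_PST N M \<longleftrightarrow> (\<exists>T. PST_at N M T)"

definition exhibits_ESE :: "nat \<Rightarrow> (nat \<Rightarrow> nat \<Rightarrow> real) \<Rightarrow> bool" where
  "exhibits_ESE N M \<longleftrightarrow>
     (\<exists>T \<tau>. PST_at N M T \<and> (\<forall>t. 0 < t \<and> t < T \<longrightarrow> \<not> PST_at N M t) \<and>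
            0 < \<tau> \<and> \<tau> < T \<and> cinner N (evol N M \<tau> (ebasis 0)) (ebasis 0) = 0)"

definition mat_spectrum :: "nat \<Rightarrow> (nat \<Rightarrow> nat \<Rightarrow> real) \<Rightarrow> complex set" where
  "mat_spectrum N M = {\<mu>. \<exists>v. (\<exists>i\<le>N. v i \<noteq> 0) \<and> (\<forall>i\<le>N. mvec N M v i = \<mu> * v i)}"

end

theory Submission
  imports Defs "Jordan_Normal_Form.Determinant"
begin

lemma h_pos: assumes "0 < t" "t \<le> pi" shows "t * cos t < sin t"
proof -
  have "(\<lambda>x. sin x - x * cos x) 0 < (\<lambda>x. sin x - x * cos x) t"
  proof (rule DERIV_pos_imp_increasing_open[OF assms(1)])
    fix x :: real assume x: "0 < x" "x < t"
    show "\<exists>y. ((\<lambda>x. sin x - x * cos x) has_real_derivative y) (at x) \<and> 0 < y"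
      apply (rule exI[of _ "x * sin x"])
      apply (intro conjI)
       apply (auto intro!: derivative_eq_intros simp: algebra_simps)[1]
      using x assms by (auto intro!: mult_pos_pos sin_gt_zero)
  next
    show "continuous_on {0..t} (\<lambda>x. sin x - x * cos x)"
      by (intro continuous_intros)
  qed
  then show ?thesis by simp
qed

lemma sinc_decr: assumes "0 < x" "x < y" "y \<le> pi" shows "sin y / y < sin x / x"
proof -
  have "(\<lambda>t. sin t / t) y < (\<lambda>t. sin t / t) x"
  proof (rule DERIV_neg_imp_decreasing_open[OF assms(2)])
    fix t :: real assume t: "x < t" "t < y"
    then have t0: "0 < t" "t < pi" using assms by auto
    show "\<exists>d. ((\<lambda>t. sin t / t) has_real_derivative d) (at t) \<and> d < 0"
      apply (rule exI[of _ "(t * cos t - sin t) / t^2"])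
      apply (intro conjI)
       apply (rule derivative_eq_intros refl | use t0 in force)+
       apply (simp add: field_simps power2_eq_square)
      using h_pos[of t] t0 by (simp add: divide_neg_pos)
  next
    show "continuous_on {x..y} (\<lambda>t. sin t / t)"
      using assms by (intro continuous_intros) auto
  qed
  then show ?thesis by simp
qed

lemma cos_rec: "cos ((r + 2) * x) = 2 * cos x * cos ((r + 1) * x) - cos (r * (x::real))"
proof -
  have "cos ((r+1)*x + x) + cos ((r+1)*x - x) = 2 * cos x * cos ((r + 1) * x)"
    by (simp add: cos_add cos_diff)
  moreover have "(r+1)*x + x = (r+2)*x" "(r+1)*x - x = r*x" by (simp_all add: algebra_simps)
  ultimately show ?thesis by simp
qed

lemma sum_cos: "2 * (1 - cos x) * (\<Sum>j=1..n. cos (real j * x)) =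
   cos (real n * x) - cos ((real n + 1) * x) - 1 + cos x"
proof (induction n)
  case 0 then show ?case by simp
next
  case (Suc n)
  have "2 * (1 - cos x) * (\<Sum>j=1..Suc n. cos (real j * x)) =
        2 * (1 - cos x) * (\<Sum>j=1..n. cos (real j * x)) + 2 * (1 - cos x) * cos ((real n + 1) * x)"
    by (simp add: algebra_simps)
  also have "\<dots> = cos (real n * x) - cos ((real n + 1) * x) - 1 + cos x + 2 * (1 - cos x) * cos ((real n + 1) * x)"
    using Suc by simp
  also have "\<dots> = cos ((real n + 1) * x) - cos ((real n + 2) * x) - 1 + cos x"
    by (subst cos_rec) (simp add: algebra_simps)
  finally show ?case by (simp add: algebra_simps)
qed

lemma sum_jcos: "2 * (1 - cos x) * (\<Sum>j=1..n. real j * cos (real j * x)) =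
   (real n + 1) * cos (real n * x) - real n * cos ((real n + 1) * x) - 1"
proof (induction n)
  case 0 then show ?case by simp
next
  case (Suc n)
  have "2 * (1 - cos x) * (\<Sum>j=1..Suc n. real j * cos (real j * x)) =
        2 * (1 - cos x) * (\<Sum>j=1..n. real j * cos (real j * x)) + 2 * (1 - cos x) * ((real n + 1) * cos ((real n + 1) * x))"
    by (simp add: algebra_simps)
  also have "\<dots> = (real n + 1) * cos (real n * x) - real n * cos ((real n + 1) * x) - 1 + 2 * (1 - cos x) * ((real n + 1) * cos ((real n + 1) * x))"
    using Suc by simp
  also have "\<dots> = (real n + 2) * cos ((real n + 1) * x) - (real n + 1) * cos ((real n + 2) * x) - 1"
    by (subst cos_rec) (simp add: algebra_simps)
  finally show ?case by (simp add: algebra_simps)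
qed

lemma sum_j: "(\<Sum>j=1..n. real j) = real n * (real n + 1) / 2"
  by (induction n) (auto simp: field_simps)
lemma sum_j2: "(\<Sum>j=1..n. real j ^ 2) = real n * (real n + 1) * (2 * real n + 1) / 6"
  by (induction n) (auto simp: field_simps power2_eq_square)
lemma sum_j3: "(\<Sum>j=1..n. real j ^ 3) = (real n * (real n + 1) / 2)^2"
  by (induction n) (auto simp: field_simps power2_eq_square power3_eq_cube)

definition bcoef :: "nat \<Rightarrow> nat \<Rightarrow> real" where
  "bcoef a j = 3 * real a * (real a + 1) - 2 * (2 * real a + 1) * real j"

lemma sum_beta_j2: "(\<Sum>j=1..a. bcoef a j * real j ^ 2) = 0"
proof -
  have e: "(\<lambda>j. bcoef a j * real j ^ 2) = (\<lambda>j. 3 * real a * (real a + 1) * real j ^ 2 - 2 * (2 * real a + 1) * real j ^ 3)"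
    by (auto simp: bcoef_def power2_eq_square power3_eq_cube algebra_simps)
  have "(\<Sum>j=1..a. bcoef a j * real j ^ 2) = 3 * real a * (real a + 1) * (\<Sum>j=1..a. real j ^ 2)
       - 2 * (2 * real a + 1) * (\<Sum>j=1..a. real j ^ 3)"
    by (simp only: e sum_subtractf sum_distrib_left[symmetric])
  also have "\<dots> = 0" by (simp only: sum_j2 sum_j3) (simp add: field_simps power2_eq_square)
  finally show ?thesis .
qed

lemma G_sum:
  fixes a :: nat and x :: real
  defines "A \<equiv> real a"
  shows "A * (A + 1) * (2 * A + 1) * (1 - cos x) - (A + 1) * (A + 2) * (1 - cos (A * x))
           + A * (A - 1) * (1 - cos ((A + 1) * x))
         = 2 * (1 - cos x) * (\<Sum>j=1..a. bcoef a j * (1 - cos (real j * x)))"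
proof -
  define S1 where "S1 = (\<Sum>j=1..a. cos (real j * x))"
  define S2 where "S2 = (\<Sum>j=1..a. real j * cos (real j * x))"
  define Sb where "Sb = (\<Sum>j=1..a. bcoef a j)"
  have e: "(\<lambda>j. bcoef a j * (1 - cos (real j * x))) = (\<lambda>j. bcoef a j - 3 * A * (A + 1) * cos (real j * x)
        + 2 * (2 * A + 1) * (real j * cos (real j * x)))"
    by (auto simp: bcoef_def A_def algebra_simps)
  have h1: "(\<Sum>j=1..a. bcoef a j * (1 - cos (real j * x))) = Sb - 3 * A * (A + 1) * S1 + 2 * (2 * A + 1) * S2"
    unfolding S1_def S2_def Sb_def
    by (simp only: e sum_subtractf sum.distrib sum_distrib_left[symmetric])
  have h2: "Sb = 3 * A * (A + 1) * A - (2 * A + 1) * A * (A + 1)"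
  proof -
    have e2: "(\<lambda>j. bcoef a j) = (\<lambda>j. 3 * A * (A + 1) - 2 * (2 * A + 1) * real j)"
      by (auto simp: bcoef_def A_def)
    show ?thesis unfolding Sb_def
      by (simp only: e2 sum_subtractf sum_distrib_left[symmetric] sum_j sum_constant) (simp add: A_def field_simps)
  qed
  have h3: "2 * (1 - cos x) * S1 = cos (A * x) - cos ((A + 1) * x) - 1 + cos x"
    unfolding S1_def A_def by (rule sum_cos)
  have h4: "2 * (1 - cos x) * S2 = (A + 1) * cos (A * x) - A * cos ((A + 1) * x) - 1"
    unfolding S2_def A_def by (rule sum_jcos)
  have calc: "2 * (1 - cos x) * (\<Sum>j=1..a. bcoef a j * (1 - cos (real j * x)))
     = 2 * (1 - cos x) * Sb - 3 * A * (A + 1) * (2 * (1 - cos x) * S1) + 2 * (2 * A + 1) * (2 * (1 - cos x) * S2)"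
    unfolding h1 by (simp add: algebra_simps)
  also have "\<dots> = 2 * (1 - cos x) * (3 * A * (A + 1) * A - (2 * A + 1) * A * (A + 1))
     - 3 * A * (A + 1) * (cos (A * x) - cos ((A + 1) * x) - 1 + cos x)
     + 2 * (2 * A + 1) * ((A + 1) * cos (A * x) - A * cos ((A + 1) * x) - 1)"
    unfolding h2 h3 h4 ..
  finally have calc2: "2 * (1 - cos x) * (\<Sum>j=1..a. bcoef a j * (1 - cos (real j * x))) = 
     2 * (1 - cos x) * (3 * A * (A + 1) * A - (2 * A + 1) * A * (A + 1))
     - 3 * A * (A + 1) * (cos (A * x) - cos ((A + 1) * x) - 1 + cos x)
     + 2 * (2 * A + 1) * ((A + 1) * cos (A * x) - A * cos ((A + 1) * x) - 1)" .
  show ?thesis unfolding calc2 by (simp add: algebra_simps)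
qed

lemma key_ineq:
  assumes "1 \<le> i" "i < j" "real j * t \<le> pi" "0 < t"
  shows "real i ^ 2 * sin (real j * t) ^ 2 < real j ^ 2 * sin (real i * t) ^ 2"
proof -
  have ij: "real i * t < real j * t" using assms by simp
  have i0: "0 < real i * t" using assms by simp
  have "sin (real j * t) / (real j * t) < sin (real i * t) / (real i * t)"
    by (rule sinc_decr[OF i0 ij assms(3)])
  then have "sin (real j * t) / (real j * t) * ((real i * t) * (real j * t)) < sin (real i * t) / (real i * t) * ((real i * t) * (real j * t))"
    using i0 ij by (intro mult_strict_right_mono) auto
  moreover have nz: "real i \<noteq> 0" "real j \<noteq> 0" "t \<noteq> 0" using assms by auto
  ultimately have "sin (real j * t) * (real i * t) < sin (real i * t) * (real j * t)"
    by (simp add: field_simps)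
  then have "(real i * sin (real j * t)) * t < (real j * sin (real i * t)) * t"
    by (simp add: algebra_simps)
  then have lt: "real i * sin (real j * t) < real j * sin (real i * t)"
    using assms(4) by (simp add: mult_less_cancel_right_pos)
  have "0 \<le> sin (real j * t)" using assms i0 ij by (intro sin_ge_zero) auto
  then have "0 \<le> real i * sin (real j * t)" by simp
  then have "(real i * sin (real j * t))^2 < (real j * sin (real i * t))^2"
    using lt by (intro power_strict_mono) auto
  then show ?thesis by (simp add: power_mult_distrib)
qed

lemma term_nonneg:
  assumes "1 \<le> i" "i \<le> a" "1 \<le> j" "j \<le> a" "real a * t \<le> pi" "0 < t"
  shows "0 \<le> (bcoef a i - bcoef a j) * (real j ^ 2 * sin (real i * t) ^ 2 - real i ^ 2 * sin (real j * t) ^ 2)"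
proof -
  have bd: "bcoef a i - bcoef a j = 2 * (2 * real a + 1) * (real j - real i)"
    by (simp add: bcoef_def algebra_simps)
  consider "i < j" | "i = j" | "j < i" by linarith
  then show ?thesis
  proof cases
    case 1
    have "real j * t \<le> real a * t" using assms by (intro mult_right_mono) auto
    then have "real i ^ 2 * sin (real j * t) ^ 2 < real j ^ 2 * sin (real i * t) ^ 2"
      using key_ineq[of i j t] 1 assms by linarith
    then show ?thesis unfolding bd using 1 by (intro mult_nonneg_nonneg) auto
  next
    case 2 then show ?thesis by simp
  next
    case 3
    have "real i * t \<le> real a * t" using assms by (intro mult_right_mono) auto
    then have "real j ^ 2 * sin (real i * t) ^ 2 < real i ^ 2 * sin (real j * t) ^ 2"
      using key_ineq[of j i t] 3 assms by linarith
    have f1: "2 * (2 * real a + 1) * (real j - real i) \<le> 0" using 3 by (simp add: mult_nonneg_nonpos)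
    show ?thesis unfolding bd by (rule mult_nonpos_nonpos[OF f1]) (use \<open>real j ^ 2 * _ < _\<close> in linarith)
  qed
qed

lemma term_pos:
  assumes "2 \<le> a" "real a * t \<le> pi" "0 < t"
  shows "0 < (bcoef a 1 - bcoef a a) * (real a ^ 2 * sin (real 1 * t) ^ 2 - real 1 ^ 2 * sin (real a * t) ^ 2)"
proof -
  have bd: "bcoef a 1 - bcoef a a = 2 * (2 * real a + 1) * (real a - 1)"
    by (simp add: bcoef_def algebra_simps)
  have "real 1 ^ 2 * sin (real a * t) ^ 2 < real a ^ 2 * sin (real 1 * t) ^ 2"
    using key_ineq[of 1 a t] assms by simp
  then show ?thesis unfolding bd using assms by (intro mult_pos_pos) auto
qed

lemma region1_sum:
  assumes "2 \<le> a" "real a * t \<le> pi" "0 < t"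
  shows "0 < (\<Sum>j=1..a. bcoef a j * sin (real j * t) ^ 2)"
proof -
  define s where "s j = sin (real j * t) ^ 2" for j
  define D where "D = (\<Sum>i=1..a. \<Sum>j=1..a. (bcoef a i - bcoef a j) * (real j ^ 2 * s i - real i ^ 2 * s j))"
  have Dpos: "0 < D" unfolding D_def
  proof (rule sum_pos2[of _ 1])
    show "finite {1..a}" by simp
    show "1 \<in> {1..a}" using assms by simp
    show "0 < (\<Sum>j=1..a. (bcoef a 1 - bcoef a j) * (real j ^ 2 * s 1 - real 1 ^ 2 * s j))"
    proof (rule sum_pos2[of _ a])
      show "0 < (bcoef a 1 - bcoef a a) * (real a ^ 2 * s 1 - real 1 ^ 2 * s a)"
        unfolding s_def using term_pos[OF assms] .
      fix j assume "j \<in> {1..a}"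
      then show "0 \<le> (bcoef a 1 - bcoef a j) * (real j ^ 2 * s 1 - real 1 ^ 2 * s j)"
        unfolding s_def using term_nonneg[of 1 a j t] assms by auto
    qed (use assms in auto)
    fix i assume "i \<in> {1..a}"
    then show "0 \<le> (\<Sum>j=1..a. (bcoef a i - bcoef a j) * (real j ^ 2 * s i - real i ^ 2 * s j))"
      unfolding s_def using term_nonneg[of i a _ t] assms by (auto intro!: sum_nonneg)
  qed
  define P where "P = (\<Sum>j=1..a. real j ^ 2)"
  define Q where "Q = (\<Sum>j=1..a. bcoef a j * s j)"
  define R where "R = (\<Sum>j=1..a. s j)"
  define Z where "Z = (\<Sum>j=1..a. bcoef a j * real j ^ 2)"
  have Z0: "Z = 0" unfolding Z_def by (rule sum_beta_j2)
  have pt: "\<And>i j. (bcoef a i - bcoef a j) * (real j ^ 2 * s i - real i ^ 2 * s j)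
     = (bcoef a i * s i) * real j ^ 2 - (bcoef a i * real i ^ 2) * s j - s i * (bcoef a j * real j ^ 2)
       + real i ^ 2 * (bcoef a j * s j)"
    by (simp add: algebra_simps)
  have "D = Q * P - Z * R - R * Z + P * Q"
    unfolding D_def pt sum_subtractf sum.distrib P_def Q_def R_def Z_def sum_product ..
  then have "D = 2 * P * Q" using Z0 by simp
  moreover have "0 < P" unfolding P_def using assms by (intro sum_pos2[of _ 1]) auto
  ultimately have "0 < Q" using Dpos by (simp add: zero_less_mult_iff)
  then show ?thesis unfolding Q_def s_def .
qed

lemma region2_identity:
  fixes A t :: real
  shows "A * (A + 1) * (2 * A + 1) * (1 - cos (2 * t)) - (A + 1) * (A + 2) * (1 - cos (A * (2 * t)))
           + A * (A - 1) * (1 - cos ((A + 1) * (2 * t)))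
       = 4 * (A^2 * (A + 2) * sin t ^ 2 - (2 * A + 1) * sin (A * t) ^ 2
              + A * (A - 1) * sin (A * t) * sin t * cos ((A + 1) * t))"
proof -
  define S where "S = sin t"
  define C where "C = cos t"
  define u where "u = sin (A * t)"
  define v where "v = cos (A * t)"
  have c1: "cos (2 * t) = 1 - 2 * S^2" unfolding S_def by (simp add: cos_double_sin)
  have c2: "cos (A * (2 * t)) = 1 - 2 * u^2" unfolding u_def
    using cos_double_sin[of "A * t"] by (simp add: mult.assoc mult.left_commute)
  have sb: "sin ((A + 1) * t) = u * C + v * S" unfolding u_def v_def S_def C_def
    by (simp add: distrib_right sin_add)
  have cb: "cos ((A + 1) * t) = v * C - u * S" unfolding u_def v_def S_def C_def
    by (simp add: distrib_right cos_add)
  have c3: "cos ((A + 1) * (2 * t)) = 1 - 2 * (u * C + v * S)^2"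
    using cos_double_sin[of "(A + 1) * t"] sb by (simp add: mult.assoc mult.left_commute)
  have p1: "S^2 + C^2 = 1" unfolding S_def C_def by simp
  have p2: "u^2 + v^2 = 1" unfolding u_def v_def by simp
  have "A * (A + 1) * (2 * A + 1) * (1 - (1 - 2 * S^2)) - (A + 1) * (A + 2) * (1 - (1 - 2 * u^2))
           + A * (A - 1) * (1 - (1 - 2 * (u * C + v * S)^2))
       - 4 * (A^2 * (A + 2) * S ^ 2 - (2 * A + 1) * u ^ 2 + A * (A - 1) * u * S * (v * C - u * S))
      = 2 * A * (A - 1) * (u^2 * (S^2 + C^2 - 1) + S^2 * (u^2 + v^2 - 1))"
    by (simp add: algebra_simps power2_eq_square)
  also have "\<dots> = 0" using p1 p2 by simp
  finally show ?thesis unfolding c1 c2 c3 cb by (simp add: S_def u_def)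
qed

lemma region2_pos:
  assumes "2 \<le> A" "pi \<le> A * t" "t < pi / 2"
  shows "0 < A^2 * (A + 2) * sin t ^ 2 - (2 * A + 1) * sin (A * t) ^ 2
              + A * (A - 1) * sin (A * t) * sin t * cos ((A + 1) * t)"
proof -
  define S where "S = sin t"
  define u where "u = sin (A * t)"
  define c where "c = cos ((A + 1) * t)"
  have t0: "0 < t"
  proof (rule ccontr)
    assume "\<not> 0 < t"
    then have "A * t \<le> 0" using assms by (simp add: mult_nonneg_nonpos)
    then show False using assms pi_gt_zero by linarith
  qed
  have "sin (pi/2) / (pi/2) < sin t / t" by (rule sinc_decr) (use assms t0 in auto)
  then have "2 / pi < S / t" unfolding S_def by simp
  then have "2 * t / pi < S" using t0 by (simp add: field_simps)
  moreover have "2 / A \<le> 2 * t / pi" using assms by (simp add: field_simps)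
  ultimately have SA: "2 / A < S" by linarith
  have "0 < 2 / A" using assms by simp
  then have S0: "0 < S" using SA by linarith
  have AS: "1 < A * S / 2" using SA assms by (simp add: field_simps)
  have "\<bar>u\<bar> \<le> 1" unfolding u_def by (rule abs_sin_le_one)
  then have ub: "\<bar>u\<bar> \<le> A * S / 2" using AS by linarith
  have cb: "\<bar>c\<bar> \<le> 1" unfolding c_def by simp
  have u2: "u^2 \<le> (A * S / 2)^2" using power_mono[OF ub abs_ge_zero, of 2] by simp
  have "\<bar>u * c\<bar> \<le> \<bar>u\<bar>" using cb by (simp add: abs_mult mult_left_le)
  then have "\<bar>u * c\<bar> \<le> A * S / 2" using ub by linarith
  then have uc: "- (A * S / 2) \<le> u * c" by linarith
  have t1: "(2 * A + 1) * u^2 \<le> (2 * A + 1) * (A * S / 2)^2" using u2 assms by (intro mult_left_mono) auto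
  have t2: "A * (A - 1) * S * (- (A * S / 2)) \<le> A * (A - 1) * S * (u * c)"
    using uc assms S0 by (intro mult_left_mono) auto
  have "0 < 9 / 4 * A^2 * S^2" using S0 assms by simp
  also have "9 / 4 * A^2 * S^2 = A^2 * (A + 2) * S ^ 2 - (2 * A + 1) * (A * S / 2)^2 + A * (A - 1) * S * (- (A * S / 2))"
    by (simp add: field_simps power2_eq_square)
  also have "\<dots> \<le> A^2 * (A + 2) * S ^ 2 - (2 * A + 1) * u^2 + A * (A - 1) * S * (u * c)"
    using t1 t2 by linarith
  finally show ?thesis unfolding S_def u_def c_def by (simp add: algebra_simps)
qed

lemma G_ab_pos:
  fixes a :: nat and x :: real
  assumes "2 \<le> a" "0 < x" "x < pi"
  defines "A \<equiv> real a"
  shows "0 < A * (A + 1) * (2 * A + 1) * (1 - cos x) - (A + 1) * (A + 2) * (1 - cos (A * x))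
           + A * (A - 1) * (1 - cos ((A + 1) * x))"
proof -
  define t where "t = x / 2"
  have x2: "x = 2 * t" unfolding t_def by simp
  have t0: "0 < t" "t < pi / 2" using assms unfolding t_def by auto
  show ?thesis
  proof (cases "A * t \<le> pi")
    case True
    have e: "1 - cos (real j * x) = 2 * sin (real j * t) ^ 2" for j
      unfolding x2 using cos_double_sin[of "real j * t"] by (simp add: mult.left_commute)
    have "(\<Sum>j=1..a. bcoef a j * (1 - cos (real j * x))) = 2 * (\<Sum>j=1..a. bcoef a j * sin (real j * t) ^ 2)"
      unfolding e by (simp add: sum_distrib_left algebra_simps)
    moreover have "0 < (\<Sum>j=1..a. bcoef a j * sin (real j * t) ^ 2)"
      using region1_sum[of a t] True assms t0 unfolding A_def by auto
    moreover have "0 < 1 - cos x"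
    proof -
      have "0 < sin t" using t0 by (intro sin_gt_zero) auto
      then show ?thesis unfolding x2 cos_double_sin by simp
    qed
    ultimately show ?thesis unfolding G_sum[of a x, folded A_def] by simp
  next
    case False
    have "2 \<le> A" using assms unfolding A_def by simp
    then have "0 < A^2 * (A + 2) * sin t ^ 2 - (2 * A + 1) * sin (A * t) ^ 2
              + A * (A - 1) * sin (A * t) * sin t * cos ((A + 1) * t)"
      using False t0 by (intro region2_pos) auto
    then show ?thesis unfolding x2 region2_identity by simp
  qed
qed

lemma G_orig_pos:
  fixes m :: nat and tau :: real
  assumes "1 \<le> m" "0 < tau" "tau < pi"
  defines "a \<equiv> real (2 * m)" and "b \<equiv> real (2 * m + 1)"
  shows "0 < (a^2 - 1) * (b^2 - 1) * (b^2 - a^2) + a^2 * b^2 * (b^2 - a^2) * cos tau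
              + b^2 * (b^2 - 1) * cos (a * tau) + a^2 * (a^2 - 1) * cos (b * tau)"
proof -
  define x where "x = pi - tau"
  have x0: "0 < x" "x < pi" using assms unfolding x_def by auto
  have c1: "cos tau = - cos x" unfolding x_def by simp
  have c2: "cos (a * tau) = cos (a * x)"
  proof -
    have "a * tau = real (2 * m) * pi - a * x" unfolding x_def a_def by (simp add: algebra_simps)
    then show ?thesis by (simp add: cos_diff sin_npi cos_npi del: of_nat_mult)
  qed
  have c3: "cos (b * tau) = - cos (b * x)"
  proof -
    have "b * tau = real (2 * m + 1) * pi - b * x" unfolding x_def b_def by (simp add: algebra_simps)
    then show ?thesis
      by (simp only: cos_diff sin_npi cos_npi) simp
  qed
  have ab: "b = a + 1" unfolding a_def b_def by simp
  have G: "0 < a * (a + 1) * (2 * a + 1) * (1 - cos x) - (a + 1) * (a + 2) * (1 - cos (a * x))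
           + a * (a - 1) * (1 - cos ((a + 1) * x))"
    using G_ab_pos[of "2 * m" x] assms x0 unfolding a_def by auto
  have a2: "2 \<le> a" using assms unfolding a_def by simp
  have "(a^2 - 1) * (b^2 - 1) * (b^2 - a^2) + a^2 * b^2 * (b^2 - a^2) * cos tau
              + b^2 * (b^2 - 1) * cos (a * tau) + a^2 * (a^2 - 1) * cos (b * tau)
     = a * b * (a * (a + 1) * (2 * a + 1) * (1 - cos x) - (a + 1) * (a + 2) * (1 - cos (a * x))
           + a * (a - 1) * (1 - cos ((a + 1) * x)))"
    unfolding c1 c2 c3 by (simp add: ab algebra_simps power2_eq_square)
  moreover have "0 < a * b" using a2 ab by simp
  ultimately show ?thesis using G by simp
qed

definition lam :: "nat \<Rightarrow> nat \<Rightarrow> real" where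
  "lam m k = (if k = 0 then 0 else if k = 1 then 1 else if k = 2 then -1
     else if k = 3 then real (2*m) else if k = 4 then - real (2*m)
     else if k = 5 then real (2*m+1) else - real (2*m+1))"

lemma sum_7: "(\<Sum>k<7::nat. F k) = F 0 + F 1 + F 2 + F 3 + F 4 + F 5 + F 6"
  by (simp add: eval_nat_numeral)

lemma prod_7: "(\<Prod>k<7::nat. F k) = F 0 * F 1 * F 2 * F 3 * F 4 * F 5 * F 6"
  by (simp add: eval_nat_numeral)

lemma sum_le6: "(\<Sum>k\<le>6::nat. F k) = F 0 + F 1 + F 2 + F 3 + F 4 + F 5 + F 6"
  by (simp add: eval_nat_numeral)

lemma lam_distinct: "1 \<le> m \<Longrightarrow> k < 7 \<Longrightarrow> l < 7 \<Longrightarrow> k \<noteq> l \<Longrightarrow> lam m k \<noteq> lam m l"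
  unfolding lam_def by (auto simp: eval_nat_numeral less_Suc_eq)

definition rmv :: "(nat \<Rightarrow> nat \<Rightarrow> real) \<Rightarrow> (nat \<Rightarrow> real) \<Rightarrow> nat \<Rightarrow> real" where
  "rmv M v i = (\<Sum>j\<le>6. M i j * v j)"

lemma real_eig:
  assumes "complex_of_real \<mu> \<in> mat_spectrum 6 M"
  shows "\<exists>v. (\<exists>i\<le>6. v i \<noteq> 0) \<and> (\<forall>i\<le>6. rmv M v i = \<mu> * v i)"
proof -
  obtain w where w1: "\<exists>i\<le>6. w i \<noteq> 0" and w2: "\<forall>i\<le>6. mvec 6 M w i = complex_of_real \<mu> * w i"
    using assms unfolding mat_spectrum_def by auto
  have re: "rmv M (\<lambda>j. Re (w j)) i = \<mu> * Re (w i)" if "i \<le> 6" for i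
  proof -
    have "rmv M (\<lambda>j. Re (w j)) i = Re (mvec 6 M w i)"
      unfolding mvec_def rmv_def Re_sum by simp
    also have "\<dots> = Re (complex_of_real \<mu> * w i)" using w2 that by simp
    also have "\<dots> = \<mu> * Re (w i)" by simp
    finally show ?thesis .
  qed
  have im: "rmv M (\<lambda>j. Im (w j)) i = \<mu> * Im (w i)" if "i \<le> 6" for i
  proof -
    have "rmv M (\<lambda>j. Im (w j)) i = Im (mvec 6 M w i)"
      unfolding mvec_def rmv_def Im_sum by simp
    also have "\<dots> = Im (complex_of_real \<mu> * w i)" using w2 that by simp
    also have "\<dots> = \<mu> * Im (w i)" by simp
    finally show ?thesis .
  qed
  show ?thesis
  proof (cases "\<exists>i\<le>6. Re (w i) \<noteq> 0")
    case True then show ?thesis using re by (intro exI[of _ "\<lambda>j. Re (w j)"]) blast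
  next
    case False
    obtain i where i: "i \<le> 6" "w i \<noteq> 0" using w1 by blast
    have "Re (w i) = 0" using False i by blast
    then have "Im (w i) \<noteq> 0" using i(2) by (auto simp: complex_eq_iff)
    then have "\<exists>i\<le>6. Im (w i) \<noteq> 0" using i by blast
    then show ?thesis using im by (intro exI[of _ "\<lambda>j. Im (w j)"]) blast
  qed
qed

lemma jac_sym: "jacobi_mat N d e i j = jacobi_mat N d e j i"
  unfolding jacobi_mat_def by auto

lemma orth:
  assumes sym: "\<And>i j. M i j = M j i"
    and v: "\<forall>i\<le>6. rmv M v i = lm * v i" and w: "\<forall>i\<le>6. rmv M w i = \<mu> * w i" and ne: "lm \<noteq> \<mu>"
  shows "(\<Sum>i\<le>6. v i * w i) = 0"
proof -
  have "lm * (\<Sum>i\<le>6. v i * w i) = (\<Sum>i\<le>6. rmv M v i * w i)"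
    using v by (simp add: sum_distrib_left algebra_simps)
  also have "\<dots> = (\<Sum>i\<le>6. \<Sum>j\<le>6. M i j * v j * w i)"
    unfolding rmv_def by (simp add: sum_distrib_right)
  also have "\<dots> = (\<Sum>j\<le>6. \<Sum>i\<le>6. M i j * v j * w i)" by (rule sum.swap)
  also have "\<dots> = (\<Sum>j\<le>6. v j * rmv M w j)"
    unfolding rmv_def by (simp add: sum_distrib_left algebra_simps sym)
  also have "\<dots> = \<mu> * (\<Sum>i\<le>6. v i * w i)"
    using w by (simp add: sum_distrib_left algebra_simps)
  finally show ?thesis using ne by simp
qed

lemma complete:
  fixes V :: "nat \<Rightarrow> nat \<Rightarrow> real" and nrm :: "nat \<Rightarrow> real"
  assumes orth: "\<And>k l. k < 7 \<Longrightarrow> l < 7 \<Longrightarrow> k \<noteq> l \<Longrightarrow> (\<Sum>i\<le>6. V k i * V l i) = 0"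
    and nrm: "\<And>k. k < 7 \<Longrightarrow> nrm k = (\<Sum>i\<le>6. V k i * V k i)"
    and npos: "\<And>k. k < 7 \<Longrightarrow> nrm k \<noteq> 0"
    and ij: "i \<le> 6" "j \<le> 6"
  shows "(\<Sum>k<7. V k i * V k j / nrm k) = (if i = j then 1 else 0)"
proof -
  define A where "A = Matrix.mat 7 7 (\<lambda>(i,k). V k i)"
  define B where "B = Matrix.mat 7 7 (\<lambda>(k,j). V k j / nrm k)"
  have A: "A \<in> carrier_mat 7 7" and B: "B \<in> carrier_mat 7 7" unfolding A_def B_def by auto
  have le: "{..6::nat} = {0..<7}" by auto
  have "B * A = 1\<^sub>m 7"
  proof (rule eq_matI)
    fix k l assume kl: "k < dim_row (1\<^sub>m 7 :: real Matrix.mat)" "l < dim_col (1\<^sub>m 7 :: real Matrix.mat)"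
    then have k: "k < 7" and l: "l < 7" by auto
    have "(B * A) $$ (k, l) = (\<Sum>i=0..<7. V k i / nrm k * V l i)"
      using k l unfolding A_def B_def by (simp add: scalar_prod_def)
    also have "\<dots> = (\<Sum>i\<le>6. V k i * V l i) / nrm k"
      unfolding le by (simp add: sum_divide_distrib algebra_simps)
    also have "\<dots> = (if k = l then 1 else 0)"
      using orth[OF k l] nrm[OF k] npos[OF k] by auto
    finally have c: "(B * A) $$ (k, l) = (if k = l then 1 else 0)" .
    have "1\<^sub>m 7 $$ (k, l) = (if k = l then (1::real) else 0)" using k l by (rule index_one_mat)
    then show "(B * A) $$ (k, l) = 1\<^sub>m 7 $$ (k, l)" using c by (simp only:)
  qed (auto simp: A_def B_def)
  then have AB: "A * B = 1\<^sub>m 7" by (rule mat_mult_left_right_inverse[OF B A])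
  have "(A * B) $$ (i, j) = (\<Sum>k=0..<7. V k i * (V k j / nrm k))"
    using ij unfolding A_def B_def by (simp add: scalar_prod_def)
  moreover have "(A * B) $$ (i, j) = (if i = j then 1 else 0)" using AB ij by simp
  moreover have "(\<Sum>k<7. V k i * V k j / nrm k) = (\<Sum>k=0..<7. V k i * (V k j / nrm k))"
    by (simp add: atLeast0LessThan)
  ultimately show ?thesis by metis
qed

lemma prod_minus: "finite A \<Longrightarrow> k \<in> A \<Longrightarrow> prod g (A - {k}) = prod (\<lambda>l. if l = k then 1 else g l) A"
proof -
  assume A: "finite A" "k \<in> A"
  have "prod (\<lambda>l. if l = k then 1 else g l) A = (if k = k then 1 else g k) * prod (\<lambda>l. if l = k then 1 else g l) (A - {k})"
    by (rule prod.remove[OF A])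
  also have "prod (\<lambda>l. if l = k then 1 else g l) (A - {k}) = prod g (A - {k})"
    by (rule prod.cong) auto
  finally show ?thesis by simp
qed

lemma k7_cases: "k < (7::nat) \<Longrightarrow> k = 0 \<or> k = 1 \<or> k = 2 \<or> k = 3 \<or> k = 4 \<or> k = 5 \<or> k = 6"
  by auto

locale jsetup =
  fixes m :: nat and d e :: "nat \<Rightarrow> real"
  assumes m1: "1 \<le> m" and epos: "\<And>i. i < 6 \<Longrightarrow> 0 < e i"
    and spec: "mat_spectrum 6 (jacobi_mat 6 d e) =
           {0, 1, -1, of_nat (2*m), - of_nat (2*m), of_nat (2*m+1), - of_nat (2*m+1)}"
begin

abbreviation "J \<equiv> jacobi_mat 6 d e"

lemma lam_in_spec: "k < 7 \<Longrightarrow> complex_of_real (lam m k) \<in> mat_spectrum 6 J"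
  unfolding spec using k7_cases[of k] by (auto simp: lam_def)

lemma ex_V: "\<exists>V. \<forall>k\<in>{..<7}. (\<exists>i\<le>6. V k i \<noteq> 0) \<and> (\<forall>i\<le>6. rmv J (V k) i = lam m k * V k i)"
  by (rule bchoice) (use real_eig lam_in_spec in auto)

definition V :: "nat \<Rightarrow> nat \<Rightarrow> real" where
  "V = (SOME V. \<forall>k\<in>{..<7}. (\<exists>i\<le>6. V k i \<noteq> 0) \<and> (\<forall>i\<le>6. rmv J (V k) i = lam m k * V k i))"

lemma V_prop: "k < 7 \<Longrightarrow> (\<exists>i\<le>6. V k i \<noteq> 0) \<and> (\<forall>i\<le>6. rmv J (V k) i = lam m k * V k i)"
  using someI_ex[OF ex_V] unfolding V_def by auto

definition nrm :: "nat \<Rightarrow> real" where "nrm k = (\<Sum>i\<le>6. V k i * V k i)"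

lemma nrm_pos: "k < 7 \<Longrightarrow> 0 < nrm k"
proof -
  assume k: "k < 7"
  then obtain i where i: "i \<le> 6" "V k i \<noteq> 0" using V_prop by blast
  show ?thesis unfolding nrm_def
    by (rule sum_pos2[of _ i]) (use i in \<open>auto simp: zero_less_mult_iff linorder_neq_iff\<close>)
qed

lemma V_orth: "k < 7 \<Longrightarrow> l < 7 \<Longrightarrow> k \<noteq> l \<Longrightarrow> (\<Sum>i\<le>6. V k i * V l i) = 0"
  by (rule orth[of J]) (use lam_distinct[OF m1] in \<open>auto simp: jac_sym V_prop\<close>)

lemma V_compl: "i \<le> 6 \<Longrightarrow> j \<le> 6 \<Longrightarrow> (\<Sum>k<7. V k i * V k j / nrm k) = (if i = j then 1 else 0)"
proof (rule complete)
  show "\<And>k l. k < 7 \<Longrightarrow> l < 7 \<Longrightarrow> k \<noteq> l \<Longrightarrow> (\<Sum>i\<le>6. V k i * V l i) = 0" by (rule V_orth)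
  show "\<And>k. k < 7 \<Longrightarrow> nrm k = (\<Sum>i\<le>6. V k i * V k i)" by (rule nrm_def)
  show "\<And>k. k < 7 \<Longrightarrow> nrm k \<noteq> 0" using nrm_pos by (metis less_irrefl)
qed

definition u :: "nat \<Rightarrow> nat \<Rightarrow> real" where "u k i = V k 0 / nrm k * V k i"

lemma u_sum: "i \<le> 6 \<Longrightarrow> (\<Sum>k<7. u k i) = (if i = 0 then 1 else 0)"
  using V_compl[of i 0] unfolding u_def by (simp add: algebra_simps)

lemma u_eig: "k < 7 \<Longrightarrow> i \<le> 6 \<Longrightarrow> rmv J (u k) i = lam m k * u k i"
proof -
  assume k: "k < 7" and i: "i \<le> 6"
  have "rmv J (u k) i = V k 0 / nrm k * rmv J (V k) i"
    unfolding rmv_def u_def by (simp add: sum_distrib_left algebra_simps)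
  then show ?thesis using V_prop[OF k] i unfolding u_def by simp
qed

lemma pow: "i \<le> 6 \<Longrightarrow> (mvec 6 J ^^ n) (ebasis 0) i = complex_of_real (\<Sum>k<7. lam m k ^ n * u k i)"
proof (induction n arbitrary: i)
  case 0
  then show ?case using u_sum[of i] by (simp add: ebasis_def)
next
  case (Suc n)
  have "(mvec 6 J ^^ Suc n) (ebasis 0) i = (\<Sum>j\<le>6. complex_of_real (J i j) * (mvec 6 J ^^ n) (ebasis 0) j)"
    by (simp add: mvec_def)
  also have "\<dots> = (\<Sum>j\<le>6. complex_of_real (J i j * (\<Sum>k<7. lam m k ^ n * u k j)))"
    using Suc.IH by (intro sum.cong) auto
  also have "\<dots> = complex_of_real (\<Sum>j\<le>6. J i j * (\<Sum>k<7. lam m k ^ n * u k j))"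
    by simp
  also have "(\<Sum>j\<le>6. J i j * (\<Sum>k<7. lam m k ^ n * u k j)) = (\<Sum>k<7. lam m k ^ n * rmv J (u k) i)"
    unfolding rmv_def by (simp add: sum_distrib_left sum_distrib_right algebra_simps sum.swap[of _ "{..6}"])
  also have "\<dots> = (\<Sum>k<7. lam m k ^ Suc n * u k i)"
    using Suc.prems by (intro sum.cong) (auto simp: u_eig)
  finally show ?case .
qed

end

lemma exp_sums_c: "(\<lambda>n. (z::complex) ^ n / of_nat (fact n)) sums exp z"
proof -
  have "(\<lambda>n. z ^ n /\<^sub>R fact n) sums exp z" by (rule exp_converges)
  moreover have "\<And>n. z ^ n /\<^sub>R fact n = z ^ n / of_nat (fact n)"
    by (simp add: scaleR_conv_of_real divide_inverse mult.commute)
  ultimately show ?thesis by simp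
qed

context jsetup begin

lemma evol_eq: "i \<le> 6 \<Longrightarrow> evol 6 J t (ebasis 0) i =
   (\<Sum>k<7. complex_of_real (u k i) * exp (- \<i> * complex_of_real t * complex_of_real (lam m k)))"
proof -
  assume i: "i \<le> 6"
  have trm: "((- \<i> * complex_of_real t) ^ n / of_nat (fact n)) * ((mvec 6 J ^^ n) (ebasis 0)) i
      = (\<Sum>k<7. complex_of_real (u k i) * ((- \<i> * complex_of_real t * complex_of_real (lam m k)) ^ n / of_nat (fact n)))" for n
    unfolding pow[OF i] power_mult_distrib by (simp add: sum_distrib_left algebra_simps)
  have "(\<lambda>n. \<Sum>k<7. complex_of_real (u k i) * ((- \<i> * complex_of_real t * complex_of_real (lam m k)) ^ n / of_nat (fact n)))
     sums (\<Sum>k<7. complex_of_real (u k i) * exp (- \<i> * complex_of_real t * complex_of_real (lam m k)))"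
    by (intro sums_sum sums_mult exp_sums_c)
  then show ?thesis unfolding evol_def trm by (rule sums_unique[symmetric])
qed

lemma cin: "cinner 6 x (ebasis 0) = x 0"
proof -
  have "(\<Sum>i\<le>6. x i * cnj (ebasis 0 i)) = (\<Sum>i\<le>6. if i = 0 then x i else 0)"
    by (rule sum.cong) (auto simp: ebasis_def)
  then show ?thesis unfolding cinner_def by simp
qed

lemma tri: "i \<le> 6 \<Longrightarrow> mvec 6 J v i = (if 0 < i then complex_of_real (e (i - 1)) * v (i - 1) else 0)
     + complex_of_real (d i) * v i + (if i < 6 then complex_of_real (e i) * v (i + 1) else 0)"
proof -
  assume "i \<le> 6"
  then have "i = 0 \<or> i = 1 \<or> i = 2 \<or> i = 3 \<or> i = 4 \<or> i = 5 \<or> i = 6" by auto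
  then show ?thesis by (elim disjE) (simp_all add: mvec_def sum_le6 jacobi_mat_def eval_nat_numeral)
qed

definition beta0 where "beta0 = (\<Prod>i<6. e i)"

lemma beta0_pos: "0 < beta0"
  unfolding beta0_def by (rule prod_pos) (use epos in auto)

lemma kry: "n \<le> 6 \<Longrightarrow> (\<forall>i. n < i \<and> i \<le> 6 \<longrightarrow> (mvec 6 J ^^ n) (ebasis 0) i = 0) \<and>
   (mvec 6 J ^^ n) (ebasis 0) n = complex_of_real (\<Prod>i<n. e i)"
proof (induction n)
  case 0 then show ?case by (simp add: ebasis_def)
next
  case (Suc n)
  then have IH1: "\<And>i. n < i \<Longrightarrow> i \<le> 6 \<Longrightarrow> (mvec 6 J ^^ n) (ebasis 0) i = 0"
    and IH2: "(mvec 6 J ^^ n) (ebasis 0) n = complex_of_real (\<Prod>i<n. e i)" by auto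
  have A: "(mvec 6 J ^^ Suc n) (ebasis 0) i = 0" if "Suc n < i" "i \<le> 6" for i
    using that by (simp add: tri IH1)
  have "(mvec 6 J ^^ Suc n) (ebasis 0) (Suc n) = complex_of_real (e n) * complex_of_real (\<Prod>i<n. e i)"
    using Suc.prems by (simp add: tri IH1 IH2)
  then have B: "(mvec 6 J ^^ Suc n) (ebasis 0) (Suc n) = complex_of_real (\<Prod>i<Suc n. e i)"
    by (simp add: mult.commute)
  show ?case using A B by blast
qed

lemma mom: "n \<le> 6 \<Longrightarrow> (\<Sum>k<7. lam m k ^ n * u k 6) = (if n = 6 then beta0 else 0)"
proof -
  assume n: "n \<le> 6"
  have "complex_of_real (\<Sum>k<7. lam m k ^ n * u k 6) = (mvec 6 J ^^ n) (ebasis 0) 6"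
    using pow[of 6 n] by simp
  also have "\<dots> = complex_of_real (if n = 6 then beta0 else 0)"
    using kry[OF n] n unfolding beta0_def by (cases "n = 6") auto
  finally show ?thesis by (simp only: of_real_eq_iff)
qed

end

lemma exp_nat_m1:
  assumes "exp (- \<i> * complex_of_real T) = -1"
  shows "exp (- \<i> * complex_of_real T * of_nat n) = (-1) ^ n"
    and "exp (- \<i> * complex_of_real T * (- of_nat n)) = (-1) ^ n"
proof -
  have "exp (- \<i> * complex_of_real T * of_nat n) = exp (of_nat n * (- \<i> * complex_of_real T))"
    by (simp add: mult.commute)
  also have "\<dots> = (-1) ^ n" unfolding exp_of_nat_mult assms ..
  finally show "exp (- \<i> * complex_of_real T * of_nat n) = (-1) ^ n" .
  have i: "exp (\<i> * complex_of_real T) = -1"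
  proof -
    have "exp (\<i> * complex_of_real T) * exp (- \<i> * complex_of_real T) = 1"
      by (simp add: exp_add[symmetric])
    then show ?thesis using assms by (simp add: minus_equation_iff)
  qed
  have "exp (- \<i> * complex_of_real T * (- of_nat n)) = exp (of_nat n * (\<i> * complex_of_real T))"
    by (simp add: mult.commute)
  also have "\<dots> = (-1) ^ n" unfolding exp_of_nat_mult i ..
  finally show "exp (- \<i> * complex_of_real T * (- of_nat n)) = (-1) ^ n" .
qed

lemma exp_pi_m1: "exp (- \<i> * complex_of_real pi) = -1"
proof -
  have "exp (- \<i> * complex_of_real pi) = exp (- (\<i> * complex_of_real pi))" by simp
  also have "\<dots> = inverse (exp (\<i> * complex_of_real pi))" by (rule exp_minus)
  also have "\<dots> = -1" by simp
  finally show ?thesis .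
qed

context jsetup begin

definition D :: "nat \<Rightarrow> real" where "D k = (\<Prod>l\<in>{..<7} - {k}. (lam m k - lam m l))"

lemma lagr: "j < 7 \<Longrightarrow> u j 6 * D j = beta0"
proof -
  assume j: "j < 7"
  define S where "S = {..<7::nat} - {j}"
  define q where "q = (\<Prod>l\<in>S. [:- lam m l, 1:])"
  have cS: "card S = 6" unfolding S_def using j by simp
  have deg: "degree q = 6" unfolding q_def
    by (subst degree_prod_sum_eq) (auto simp: cS)
  have lc: "coeff q 6 = 1"
  proof -
    have "lead_coeff q = 1" unfolding q_def lead_coeff_prod by simp
    then show ?thesis using deg by simp
  qed
  have pq: "poly q x = (\<Prod>l\<in>S. (x - lam m l))" for x
    unfolding q_def poly_prod by simp
  have "(\<Sum>k<7. poly q (lam m k) * u k 6) = (\<Sum>k<7. (\<Sum>n\<le>6. coeff q n * lam m k ^ n) * u k 6)"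
    unfolding poly_altdef deg ..
  also have "\<dots> = (\<Sum>n\<le>6. coeff q n * (\<Sum>k<7. lam m k ^ n * u k 6))"
    by (simp add: sum_distrib_left sum_distrib_right algebra_simps sum.swap[of _ "{..<7}"])
  also have "\<dots> = (\<Sum>n\<le>6. coeff q n * (if n = 6 then beta0 else 0))"
    by (rule sum.cong) (auto simp: mom)
  also have "\<dots> = beta0" using lc by (simp add: if_distrib[of "(*) _"] cong: if_cong)
  finally have s1: "(\<Sum>k<7. poly q (lam m k) * u k 6) = beta0" .
  have z: "poly q (lam m k) = 0" if "k < 7" "k \<noteq> j" for k
  proof -
    have "k \<in> S" unfolding S_def using that by simp
    then show ?thesis unfolding pq by (intro prod_zero) (auto simp: S_def)
  qed
  have "(\<Sum>k<7. poly q (lam m k) * u k 6) = poly q (lam m j) * u j 6 + (\<Sum>k\<in>{..<7} - {j}. poly q (lam m k) * u k 6)"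
    using j by (subst sum.remove[of _ j]) auto
  also have "(\<Sum>k\<in>{..<7} - {j}. poly q (lam m k) * u k 6) = 0"
    by (rule sum.neutral) (auto simp: z)
  finally have "poly q (lam m j) * u j 6 = beta0" using s1 by simp
  moreover have "poly q (lam m j) = D j" unfolding pq D_def S_def ..
  ultimately show ?thesis by (simp add: mult.commute)
qed

lemma V_inner_u: "k < 7 \<Longrightarrow> l < 7 \<Longrightarrow> (\<Sum>i\<le>6. u k i * V l i) = (if k = l then V l 0 else 0)"
proof -
  assume k: "k < 7" and l: "l < 7"
  have "(\<Sum>i\<le>6. u k i * V l i) = V k 0 / nrm k * (\<Sum>i\<le>6. V k i * V l i)"
    unfolding u_def by (simp add: sum_distrib_left algebra_simps)
  then show ?thesis using V_orth[OF k l] nrm_pos[OF k] unfolding nrm_def by auto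
qed

abbreviation E :: "real \<Rightarrow> nat \<Rightarrow> complex" where
  "E t k \<equiv> exp (- \<i> * complex_of_real t * complex_of_real (lam m k))"

lemma pst_rel:
  assumes "PST_at 6 J T"
  shows "\<exists>\<phi>. (\<forall>i\<le>6. evol 6 J T (ebasis 0) i = exp (\<i> * complex_of_real \<phi>) * ebasis 6 i) \<and>
             (\<forall>l<7. E T l * complex_of_real (V l 0) = exp (\<i> * complex_of_real \<phi>) * complex_of_real (V l 6))"
proof -
  obtain \<phi> where h: "\<forall>i\<le>6. evol 6 J T (ebasis 0) i = exp (\<i> * complex_of_real \<phi>) * ebasis 6 i"
    using assms unfolding PST_at_def by blast
  have "E T l * complex_of_real (V l 0) = exp (\<i> * complex_of_real \<phi>) * complex_of_real (V l 6)" if l: "l < 7" for l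
  proof -
    have "(\<Sum>i\<le>6. evol 6 J T (ebasis 0) i * complex_of_real (V l i))
        = (\<Sum>i\<le>6. exp (\<i> * complex_of_real \<phi>) * ebasis 6 i * complex_of_real (V l i))"
      using h by (intro sum.cong) auto
    also have "\<dots> = (\<Sum>i\<le>6. if i = 6 then exp (\<i> * complex_of_real \<phi>) * complex_of_real (V l i) else 0)"
      by (rule sum.cong) (auto simp: ebasis_def)
    also have "\<dots> = exp (\<i> * complex_of_real \<phi>) * complex_of_real (V l 6)" by simp
    finally have r: "(\<Sum>i\<le>6. evol 6 J T (ebasis 0) i * complex_of_real (V l i)) = exp (\<i> * complex_of_real \<phi>) * complex_of_real (V l 6)" .
    have "(\<Sum>i\<le>6. evol 6 J T (ebasis 0) i * complex_of_real (V l i))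
        = (\<Sum>i\<le>6. \<Sum>k<7. E T k * complex_of_real (u k i * V l i))"
      by (intro sum.cong) (auto simp: evol_eq sum_distrib_left sum_distrib_right algebra_simps)
    also have "\<dots> = (\<Sum>k<7. E T k * complex_of_real (\<Sum>i\<le>6. u k i * V l i))"
      by (subst sum.swap) (simp add: sum_distrib_left)
    also have "\<dots> = (\<Sum>k<7. if k = l then E T k * complex_of_real (V l 0) else 0)"
      using l by (intro sum.cong) (auto simp: V_inner_u)
    also have "\<dots> = E T l * complex_of_real (V l 0)" using l by simp
    finally show ?thesis using r by simp
  qed
  then show ?thesis using h by blast
qed

end

context jsetup begin

lemma D_eq: "k < 7 \<Longrightarrow> D k = (\<Prod>l<7. if l = k then 1 else lam m k - lam m l)"
  unfolding D_def by (rule prod_minus) auto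

lemma D_vals:
  defines "A \<equiv> real (2 * m)" and "B \<equiv> real (2 * m + 1)"
  shows "D 0 = - (A^2 * B^2)" "D 1 = 2 * (A^2 - 1) * (B^2 - 1)" "D 2 = 2 * (A^2 - 1) * (B^2 - 1)"
    "D 3 = 2 * A^2 * (A^2 - 1) * (A^2 - B^2)" "D 4 = 2 * A^2 * (A^2 - 1) * (A^2 - B^2)"
    "D 5 = 2 * B^2 * (B^2 - 1) * (B^2 - A^2)" "D 6 = 2 * B^2 * (B^2 - 1) * (B^2 - A^2)"
  unfolding A_def B_def by (simp_all add: D_eq prod_7 lam_def algebra_simps power2_eq_square)

end

lemma exp_real_m1:
  assumes "exp (- \<i> * complex_of_real T) = -1"
  shows "exp (- \<i> * complex_of_real T * complex_of_real (real n)) = (-1) ^ n"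
    and "exp (- \<i> * complex_of_real T * complex_of_real (- real n)) = (-1) ^ n"
  using exp_nat_m1[OF assms, of n] by simp_all

lemma ReE: "Re (complex_of_real r * exp (- \<i> * complex_of_real t * complex_of_real l)) = r * cos (t * l)"
proof -
  have e: "- \<i> * complex_of_real t * complex_of_real l = \<i> * complex_of_real (- (t * l))" by simp
  have "exp (- \<i> * complex_of_real t * complex_of_real l) = cis (- (t * l))"
    unfolding e cis_conv_exp ..
  then show ?thesis by simp
qed

lemma br:
  fixes x y c1 c2 c3 :: real
  assumes "1 < x" "x < y"
  shows "x * y * (x - 1) * (y - 1) * (y - x) * (1 / (x * y) + 2 * (c1 / (2 * ((x - 1) * (y - 1))))
     + 2 * (c2 / (2 * (x * (x - 1) * (y - x)))) + 2 * (c3 / (2 * (y * (y - 1) * (y - x)))))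
   = (x - 1) * (y - 1) * (y - x) + x * y * (y - x) * c1 + y * (y - 1) * c2 + x * (x - 1) * c3"
proof -
  have nz: "x \<noteq> 0" "y \<noteq> 0" "x - 1 \<noteq> 0" "y - 1 \<noteq> 0" "y - x \<noteq> 0" using assms by auto
  define K where "K = x * y * (x - 1) * (y - 1) * (y - x)"
  have gen: "Q \<noteq> 0 \<Longrightarrow> Q * (2 * (c / (2 * Q))) = c" for Q c :: real by simp
  have e0: "K * (1 / (x * y)) = (x - 1) * (y - 1) * (y - x)"
  proof -
    have "K = ((x - 1) * (y - 1) * (y - x)) * (x * y)" unfolding K_def by (simp add: algebra_simps)
    then show ?thesis using nz by simp
  qed
  have e1: "K * (2 * (c1 / (2 * ((x - 1) * (y - 1))))) = x * y * (y - x) * c1"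
  proof -
    have "K = (x * y * (y - x)) * ((x - 1) * (y - 1))" unfolding K_def by (simp add: algebra_simps)
    then show ?thesis using gen[of "(x - 1) * (y - 1)" c1] nz by (simp only: mult.assoc) simp
  qed
  have e2: "K * (2 * (c2 / (2 * (x * (x - 1) * (y - x))))) = y * (y - 1) * c2"
  proof -
    have "K = (y * (y - 1)) * (x * (x - 1) * (y - x))" unfolding K_def by (simp add: algebra_simps)
    then show ?thesis using gen[of "x * (x - 1) * (y - x)" c2] nz by (simp only: mult.assoc) simp
  qed
  have e3: "K * (2 * (c3 / (2 * (y * (y - 1) * (y - x))))) = x * (x - 1) * c3"
  proof -
    have "K = (x * (x - 1)) * (y * (y - 1) * (y - x))" unfolding K_def by (simp add: algebra_simps)
    then show ?thesis using gen[of "y * (y - 1) * (y - x)" c3] nz by (simp only: mult.assoc) simp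
  qed
  show ?thesis unfolding K_def[symmetric] by (simp only: distrib_left e0 e1 e2 e3)
qed

lemma comb:
  fixes b P0 X Y Z c1 c2 c3 :: real
  shows "b / P0 * 1 + b / (2 * X) * c1 + b / (2 * X) * c1 + b / (2 * Y) * c2 + b / (2 * Y) * c2
     + b / (2 * Z) * c3 + b / (2 * Z) * c3 = b * (1 / P0 + 2 * (c1 / (2 * X)) + 2 * (c2 / (2 * Y)) + 2 * (c3 / (2 * Z)))"
  by (simp add: algebra_simps)

lemma final_ineq:
  fixes m :: nat and tau :: real
  assumes "1 \<le> m" "0 < tau" "tau < pi"
  defines "A \<equiv> real (2 * m)" and "B \<equiv> real (2 * m + 1)"
  shows "0 < 1 / (A^2 * B^2) + 2 * (cos tau / (2 * ((A^2 - 1) * (B^2 - 1))))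
     + 2 * (cos (tau * A) / (2 * (A^2 * (A^2 - 1) * (B^2 - A^2))))
     + 2 * (cos (tau * B) / (2 * (B^2 * (B^2 - 1) * (B^2 - A^2))))"
proof -
  have G: "0 < (A^2 - 1) * (B^2 - 1) * (B^2 - A^2) + A^2 * B^2 * (B^2 - A^2) * cos tau
              + B^2 * (B^2 - 1) * cos (A * tau) + A^2 * (A^2 - 1) * cos (B * tau)"
    using G_orig_pos[OF assms(1-3)] unfolding A_def B_def .
  have A2: "2 \<le> A" using assms unfolding A_def by simp
  have BA: "B = A + 1" unfolding A_def B_def by simp
  have "4 \<le> A^2" using power_mono[OF A2, of 2] by simp
  then have p1: "1 < A^2" by simp
  have p3: "A^2 < B^2" using A2 BA by (simp add: power2_eq_square algebra_simps)
  define K where "K = A^2 * B^2 * (A^2 - 1) * (B^2 - 1) * (B^2 - A^2)"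
  have K: "0 < K" unfolding K_def using p1 p3 by (intro mult_pos_pos) auto
  have "K * (1 / (A^2 * B^2) + 2 * (cos tau / (2 * ((A^2 - 1) * (B^2 - 1))))
     + 2 * (cos (tau * A) / (2 * (A^2 * (A^2 - 1) * (B^2 - A^2))))
     + 2 * (cos (tau * B) / (2 * (B^2 * (B^2 - 1) * (B^2 - A^2)))))
     = (A^2 - 1) * (B^2 - 1) * (B^2 - A^2) + A^2 * B^2 * (B^2 - A^2) * cos tau
              + B^2 * (B^2 - 1) * cos (A * tau) + A^2 * (A^2 - 1) * cos (B * tau)"
    unfolding K_def using br[OF p1 p3, of "cos tau" "cos (tau * A)" "cos (tau * B)"]
    by (simp add: mult.commute)
  then show ?thesis using G K by (metis zero_less_mult_pos)
qed

context jsetup begin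

lemma pst_conseq:
  assumes "PST_at 6 J T"
  shows "exp (- \<i> * complex_of_real T) = -1" and "\<And>k. k < 7 \<Longrightarrow> u k 0 = beta0 / \<bar>D k\<bar>"
proof -
  obtain \<phi> where h2: "\<forall>l<7. E T l * complex_of_real (V l 0) = exp (\<i> * complex_of_real \<phi>) * complex_of_real (V l 6)"
    using pst_rel[OF assms] by blast
  define P where "P = exp (\<i> * complex_of_real \<phi>)"
  have cP: "cmod P = 1" unfolding P_def by (rule norm_exp_i_times)
  have cE: "cmod (E t k) = 1" for t k by (simp add: norm_exp_eq_Re)
  have absV: "\<bar>V l 0\<bar> = \<bar>V l 6\<bar>" if "l < 7" for l
  proof -
    have "cmod (E T l * complex_of_real (V l 0)) = cmod (P * complex_of_real (V l 6))"
      using h2 that unfolding P_def by simp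
    then show ?thesis unfolding norm_mult cP cE by simp
  qed
  have absu: "\<bar>u l 6\<bar> = u l 0" if l: "l < 7" for l
  proof -
    have "\<bar>u l 6\<bar> = \<bar>V l 0\<bar> * \<bar>V l 6\<bar> / nrm l" using nrm_pos[OF l] unfolding u_def by (simp add: abs_mult)
    also have "\<dots> = \<bar>V l 0\<bar> * \<bar>V l 0\<bar> / nrm l" using absV[OF l] by simp
    also have "\<dots> = u l 0" unfolding u_def by (simp add: abs_mult_self)
    finally show ?thesis .
  qed
  have Dnz: "D l \<noteq> 0" if "l < 7" for l using lagr[OF that] beta0_pos by auto
  show w: "u k 0 = beta0 / \<bar>D k\<bar>" if k: "k < 7" for k
  proof -
    have "\<bar>u k 6\<bar> * \<bar>D k\<bar> = beta0" using lagr[OF k] beta0_pos by (metis abs_mult abs_of_pos)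
    then show ?thesis using absu[OF k] Dnz[OF k] by (simp add: field_simps)
  qed
  define A where "A = real (2 * m)"
  define B where "B = real (2 * m + 1)"
  have A2: "2 \<le> A" using m1 unfolding A_def by simp
  have BA: "B = A + 1" unfolding A_def B_def by simp
  have "4 \<le> A^2" using power_mono[OF A2, of 2] by simp
  then have p1: "0 < A^2 - 1" by simp
  have "9 \<le> B^2" using power_mono[of 3 B 2] A2 BA by simp
  then have p2: "0 < B^2 - 1" by simp
  have p3: "0 < B^2 - A^2" using A2 BA by (simp add: power2_eq_square algebra_simps)
  have p4: "0 < A^2" "0 < B^2" using A2 BA by auto
  have D5: "0 < D 5" unfolding D_vals A_def[symmetric] B_def[symmetric] using p1 p2 p3 p4 by simp
  have D3: "D 3 < 0" unfolding D_vals A_def[symmetric] B_def[symmetric] using p1 p2 p3 p4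
    by (simp add: mult_pos_neg)
  have "0 < u 5 6 * D 5" using lagr[of 5] beta0_pos by simp
  then have u5: "0 < u 5 6" using D5 by (auto simp: zero_less_mult_iff)
  have "0 < u 3 6 * D 3" using lagr[of 3] beta0_pos by simp
  then have u3: "u 3 6 < 0" using D3 by (auto simp: zero_less_mult_iff)
  have s5: "0 < V 5 0 * V 5 6" using u5 nrm_pos[of 5] unfolding u_def by (simp add: zero_less_divide_iff)
  have s3: "V 3 0 * V 3 6 < 0" using u3 nrm_pos[of 3] unfolding u_def by (simp add: divide_less_0_iff)
  have v5: "V 5 6 = V 5 0" "V 5 0 \<noteq> 0" using s5 absV[of 5] by (auto simp: zero_less_mult_iff abs_if split: if_splits)
  have v3: "V 3 6 = - V 3 0" "V 3 0 \<noteq> 0" using s3 absV[of 3] by (auto simp: mult_less_0_iff abs_if split: if_splits)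
  have "E T 5 * complex_of_real (V 5 0) = P * complex_of_real (V 5 0)"
    using h2[rule_format, of 5] v5(1) unfolding P_def by simp
  then have e5: "E T 5 = P" using v5(2) by simp
  have "E T 3 * complex_of_real (V 3 0) = (- P) * complex_of_real (V 3 0)"
    using h2[rule_format, of 3] v3(1) unfolding P_def by simp
  then have e3: "E T 3 = - P" using v3(2) by (simp only: mult_cancel_right) simp
  have "E T 5 = exp (- \<i> * complex_of_real T) * E T 3"
  proof -
    have eq: "- \<i> * complex_of_real T * complex_of_real (lam m 5) = - \<i> * complex_of_real T + - \<i> * complex_of_real T * complex_of_real (lam m 3)"
      by (simp add: lam_def algebra_simps)
    show ?thesis unfolding eq exp_add ..
  qed
  then have "P = exp (- \<i> * complex_of_real T) * (- P)" using e5 e3 by simp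
  moreover have "P \<noteq> 0" using cP by auto
  ultimately show "exp (- \<i> * complex_of_real T) = -1"
    by (metis minus_mult_right mult_cancel_right2 mult_minus_left minus_equation_iff)
qed

lemma lam_nat: "k < 7 \<Longrightarrow> \<exists>n. lam m k = real n \<or> lam m k = - real n"
proof -
  assume "k < 7"
  then consider "k = 0" | "k = 1" | "k = 2" | "k = 3" | "k = 4" | "k = 5" | "k = 6" by force
  then show ?thesis
  proof cases
    case 1 then show ?thesis by (intro exI[of _ 0]) (simp add: lam_def)
  next
    case 2 then show ?thesis by (intro exI[of _ 1]) (simp add: lam_def)
  next
    case 3 then show ?thesis by (intro exI[of _ 1]) (simp add: lam_def)
  next
    case 4 then show ?thesis by (intro exI[of _ "2*m"]) (simp add: lam_def)
  next
    case 5 then show ?thesis by (intro exI[of _ "2*m"]) (simp add: lam_def)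
  next
    case 6 then show ?thesis by (intro exI[of _ "2*m+1"]) (simp add: lam_def)
  next
    case 7 then show ?thesis by (intro exI[of _ "2*m+1"]) (simp add: lam_def)
  qed
qed

lemma E_same: "exp (- \<i> * complex_of_real T) = -1 \<Longrightarrow> k < 7 \<Longrightarrow> E pi k = E T k"
proof -
  assume T: "exp (- \<i> * complex_of_real T) = -1" and k: "k < 7"
  obtain n where "lam m k = real n \<or> lam m k = - real n" using lam_nat[OF k] by blast
  then show ?thesis
    using exp_real_m1[OF T, of n] exp_real_m1[OF exp_pi_m1, of n] by auto
qed

lemma pst_pi: "PST_at 6 J T \<Longrightarrow> PST_at 6 J pi"
proof -
  assume pst: "PST_at 6 J T"
  obtain \<phi> where h: "\<forall>i\<le>6. evol 6 J T (ebasis 0) i = exp (\<i> * complex_of_real \<phi>) * ebasis 6 i"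
    using pst unfolding PST_at_def by blast
  have T: "exp (- \<i> * complex_of_real T) = -1" by (rule pst_conseq(1)[OF pst])
  have "evol 6 J pi (ebasis 0) i = evol 6 J T (ebasis 0) i" if "i \<le> 6" for i
    unfolding evol_eq[OF that] by (intro sum.cong refl) (use E_same[OF T] in auto)
  then show ?thesis unfolding PST_at_def using h pi_gt_zero by auto
qed

lemma f_pos:
  assumes pst: "PST_at 6 J T" and tau: "0 < tau" "tau < pi"
  shows "0 < Re (cinner 6 (evol 6 J tau (ebasis 0)) (ebasis 0))"
proof -
  define A where "A = real (2 * m)"
  define B where "B = real (2 * m + 1)"
  have A2: "2 \<le> A" using m1 unfolding A_def by simp
  have BA: "B = A + 1" unfolding A_def B_def by simp
  have "4 \<le> A^2" using power_mono[OF A2, of 2] by simp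
  then have p1: "0 < A^2 - 1" by simp
  have "9 \<le> B^2" using power_mono[of 3 B 2] A2 BA by simp
  then have p2: "0 < B^2 - 1" by simp
  have p3: "0 < B^2 - A^2" using A2 BA by (simp add: power2_eq_square algebra_simps)
  have p4: "0 < A^2" "0 < B^2" using A2 BA by auto
  have a0: "\<bar>D 0\<bar> = A^2 * B^2" unfolding D_vals A_def[symmetric] B_def[symmetric] by simp
  have a1: "\<bar>D 1\<bar> = 2 * ((A^2 - 1) * (B^2 - 1))" "\<bar>D 2\<bar> = 2 * ((A^2 - 1) * (B^2 - 1))"
    unfolding D_vals A_def[symmetric] B_def[symmetric] using p1 p2 by (simp_all add: abs_mult)
  have a3: "\<bar>D 3\<bar> = 2 * (A^2 * (A^2 - 1) * (B^2 - A^2))" "\<bar>D 4\<bar> = 2 * (A^2 * (A^2 - 1) * (B^2 - A^2))"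
    unfolding D_vals A_def[symmetric] B_def[symmetric] using p1 p3 by (simp_all add: abs_mult)
  have a5: "\<bar>D 5\<bar> = 2 * (B^2 * (B^2 - 1) * (B^2 - A^2))" "\<bar>D 6\<bar> = 2 * (B^2 * (B^2 - 1) * (B^2 - A^2))"
    unfolding D_vals A_def[symmetric] B_def[symmetric] using p2 p3 by (simp_all add: abs_mult)
  have l: "lam m 0 = 0" "lam m 1 = 1" "lam m 2 = -1" "lam m 3 = A" "lam m 4 = -A" "lam m 5 = B" "lam m 6 = -B"
    unfolding lam_def A_def B_def by simp_all
  have "Re (cinner 6 (evol 6 J tau (ebasis 0)) (ebasis 0)) = (\<Sum>k<7. u k 0 * cos (tau * lam m k))"
    unfolding cin evol_eq[OF le0] Re_sum ReE ..
  also have "\<dots> = (\<Sum>k<7. beta0 / \<bar>D k\<bar> * cos (tau * lam m k))"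
    by (intro sum.cong) (auto simp: pst_conseq(2)[OF pst])
  also have "\<dots> = beta0 / (A^2 * B^2) * 1 + beta0 / (2 * ((A^2 - 1) * (B^2 - 1))) * cos tau
     + beta0 / (2 * ((A^2 - 1) * (B^2 - 1))) * cos tau
     + beta0 / (2 * (A^2 * (A^2 - 1) * (B^2 - A^2))) * cos (tau * A)
     + beta0 / (2 * (A^2 * (A^2 - 1) * (B^2 - A^2))) * cos (tau * A)
     + beta0 / (2 * (B^2 * (B^2 - 1) * (B^2 - A^2))) * cos (tau * B)
     + beta0 / (2 * (B^2 * (B^2 - 1) * (B^2 - A^2))) * cos (tau * B)"
    unfolding sum_7 a0 a1 a3 a5 l by simp
  also have "\<dots> = beta0 * (1 / (A^2 * B^2) + 2 * (cos tau / (2 * ((A^2 - 1) * (B^2 - 1))))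
     + 2 * (cos (tau * A) / (2 * (A^2 * (A^2 - 1) * (B^2 - A^2))))
     + 2 * (cos (tau * B) / (2 * (B^2 * (B^2 - 1) * (B^2 - A^2)))))"
    by (rule comb)
  finally show ?thesis
    using final_ineq[OF m1 tau] beta0_pos unfolding A_def B_def by simp
qed

end

theorem theorem3p2:
  fixes m :: nat and a b :: "nat \<Rightarrow> real"
  assumes "m \<ge> 1"
    and "is_jacobi_params 6 a b"
    and "realizes_PST 6 (jacobi_mat 6 a b)"
    and "mat_spectrum 6 (jacobi_mat 6 a b) =
           {0, 1, -1, of_nat (2*m), - of_nat (2*m), of_nat (2*m+1), - of_nat (2*m+1)}"
  shows "\<not> exhibits_ESE 6 (jacobi_mat 6 a b)"
proof
  assume ese: "exhibits_ESE 6 (jacobi_mat 6 a b)"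
  interpret jsetup m a b
    using assms(1,2,4) by unfold_locales (auto simp: is_jacobi_params_def)
  obtain T tau where pst: "PST_at 6 (jacobi_mat 6 a b) T"
    and minT: "\<forall>t. 0 < t \<and> t < T \<longrightarrow> \<not> PST_at 6 (jacobi_mat 6 a b) t"
    and tau: "0 < tau" "tau < T"
    and z: "cinner 6 (evol 6 (jacobi_mat 6 a b) tau (ebasis 0)) (ebasis 0) = 0"
    using ese unfolding exhibits_ESE_def by blast
  have "PST_at 6 (jacobi_mat 6 a b) pi" by (rule pst_pi[OF pst])
  then have "\<not> (0 < pi \<and> pi < T)" using minT by blast
  then have "T \<le> pi" using pi_gt_zero by linarith
  then have "tau < pi" using tau by linarith
  then have "0 < Re (cinner 6 (evol 6 (jacobi_mat 6 a b) tau (ebasis 0)) (ebasis 0))"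
    using f_pos[OF pst tau(1)] by blast
  then show False using z by simp
qed

end
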